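(* Let $R$ be an integral domain, $n\ge2$, and $I$ a proper subset of $\{1,\ldots,n\}$. Then $\mathbf{U}_n(R)$ is the Hirsch–Plotkin radical of $\mathbf{S}^I_n(R)$, i.e. the unique maximal normal locally nilpotent subgroup of $\mathbf{S}^I_n(R)$. In particular, $\mathbf{U}_n(R)$ is a characteristic subgroup of $\mathbf{S}^I_n(R)$.
   Context: $\mathbf{S}^I_n(R)$ is the group of upper triangular $n\times n$ matrices over $R$ with diagonal entries in $U(R)$, the $j$-th diagonal entry equal to $1$ for $j\notin I$; $\mathbf{U}_n(R)$ is its subgroup of upper unitriangular matrices. *)

theory Defs
  imports "Jordan_Normal_Form.Matrix" "HOL-Algebra.Coset" "HOL-Algebra.Generated_Groups"
begin

text \<open>Matrices are n x n with 0-based indices 0..n-1 (Jordan_Normal_Form convention).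
  The ring R is an integral domain, rendered as a type of class idom; U(R) = {x. x dvd 1}.\<close>

definition S_mat :: "nat \<Rightarrow> nat set \<Rightarrow> 'a::idom mat set" where
  "S_mat n I = {A \<in> carrier_mat n n. upper_triangular A
      \<and> (\<forall>i<n. A $$ (i,i) dvd 1) \<and> (\<forall>i<n. i \<notin> I \<longrightarrow> A $$ (i,i) = 1)}"

definition U_mat :: "nat \<Rightarrow> 'a::idom mat set" where
  "U_mat n = {A \<in> carrier_mat n n. upper_triangular A \<and> (\<forall>i<n. A $$ (i,i) = 1)}"

definition S_group :: "nat \<Rightarrow> nat set \<Rightarrow> ('a::idom mat) monoid" where
  "S_group n I = \<lparr>carrier = S_mat n I, mult = (*), one = 1\<^sub>m n\<rparr>"

definition comm_set :: "('g, 'b) monoid_scheme \<Rightarrow> 'g set \<Rightarrow> 'g set \<Rightarrow> 'g set" where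
  "comm_set G A B = {a \<otimes>\<^bsub>G\<^esub> b \<otimes>\<^bsub>G\<^esub> inv\<^bsub>G\<^esub> a \<otimes>\<^bsub>G\<^esub> inv\<^bsub>G\<^esub> b | a b. a \<in> A \<and> b \<in> B}"

fun lower_central :: "('g, 'b) monoid_scheme \<Rightarrow> 'g set \<Rightarrow> nat \<Rightarrow> 'g set" where
  "lower_central G H 0 = H"
| "lower_central G H (Suc k) = generate G (comm_set G (lower_central G H k) H)"

definition nilpotent_subgroup :: "('g, 'b) monoid_scheme \<Rightarrow> 'g set \<Rightarrow> bool" where
  "nilpotent_subgroup G H \<longleftrightarrow> subgroup H G \<and> (\<exists>k. lower_central G H k = {\<one>\<^bsub>G\<^esub>})"

definition locally_nilpotent_subgroup :: "('g, 'b) monoid_scheme \<Rightarrow> 'g set \<Rightarrow> bool" where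
  "locally_nilpotent_subgroup G H \<longleftrightarrow> subgroup H G \<and>
     (\<forall>F. finite F \<and> F \<subseteq> H \<longrightarrow> nilpotent_subgroup G (generate G F))"

text \<open>H is the Hirsch-Plotkin radical of G: a normal locally nilpotent subgroup containing
  every normal locally nilpotent subgroup (hence the unique maximal one).\<close>
definition hirsch_plotkin_radical :: "('g, 'b) monoid_scheme \<Rightarrow> 'g set \<Rightarrow> bool" where
  "hirsch_plotkin_radical G H \<longleftrightarrow> H \<lhd> G \<and> locally_nilpotent_subgroup G H \<and>
     (\<forall>N. N \<lhd> G \<and> locally_nilpotent_subgroup G N \<longrightarrow> N \<subseteq> H)"

definition characteristic_subgroup :: "('g, 'b) monoid_scheme \<Rightarrow> 'g set \<Rightarrow> bool" where
  "characteristic_subgroup G H \<longleftrightarrow> subgroup H G \<and> (\<forall>\<phi> \<in> iso G G. \<phi> ` H = H)"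

end

theory Submission
  imports Defs "Jordan_Normal_Form.Determinant"
begin

lemma mult_entry:
  assumes "A \<in> carrier_mat n n" "B \<in> carrier_mat n n" "i < n" "j < n"
  shows "(A * B) $$ (i,j) = (\<Sum>k<n. A $$ (i,k) * B $$ (k,j))"
  using assms by (simp add: scalar_prod_def atLeast0LessThan)

lemma sum_single:
  fixes f :: "nat \<Rightarrow> 'a::comm_monoid_add"
  assumes "j < n" "\<And>k. k < n \<Longrightarrow> k \<noteq> j \<Longrightarrow> f k = 0"
  shows "(\<Sum>k<n. f k) = f j"
proof -
  have "(\<Sum>k<n. f k) = f j + (\<Sum>k\<in>{..<n} - {j}. f k)"
    using assms(1) by (subst sum.remove[of _ j]) auto
  also have "(\<Sum>k\<in>{..<n} - {j}. f k) = 0" using assms(2) by (intro sum.neutral) auto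
  finally show ?thesis by simp
qed

lemma sum_two:
  fixes f :: "nat \<Rightarrow> 'a::comm_monoid_add"
  assumes "j < n" "i < j" "\<And>k. k < n \<Longrightarrow> k \<noteq> j \<Longrightarrow> k \<noteq> i \<Longrightarrow> f k = 0"
  shows "(\<Sum>k<n. f k) = f i + f j"
proof -
  have "(\<Sum>k<n. f k) = f j + (\<Sum>k\<in>{..<n} - {j}. f k)"
    using assms(1) by (subst sum.remove[of _ j]) auto
  also have "(\<Sum>k\<in>{..<n} - {j}. f k) = f i + (\<Sum>k\<in>{..<n} - {j} - {i}. f k)"
    using assms(1,2) by (subst sum.remove[of _ i]) auto
  also have "(\<Sum>k\<in>{..<n} - {j} - {i}. f k) = 0" using assms(3) by (intro sum.neutral) auto
  finally show ?thesis by (simp add: ac_simps)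
qed

lemma ut_entry: "upper_triangular A \<Longrightarrow> A \<in> carrier_mat n n \<Longrightarrow> j < i \<Longrightarrow> i < n \<Longrightarrow> A $$ (i,j) = 0"
  unfolding upper_triangular_def by auto

lemma ut_mult:
  fixes A B :: "'a::comm_ring_1 mat"
  assumes A: "A \<in> carrier_mat n n" "upper_triangular A" and B: "B \<in> carrier_mat n n" "upper_triangular B"
  shows "upper_triangular (A * B)"
proof (rule upper_triangularI)
  fix i j assume ij: "j < i" "i < dim_row (A * B)"
  then have i: "i < n" using A by simp
  have "(A * B) $$ (i,j) = (\<Sum>k<n. A $$ (i,k) * B $$ (k,j))"
    using mult_entry[OF A(1) B(1) i] ij i by simp
  also have "\<dots> = 0"
  proof (intro sum.neutral ballI)
    fix k assume k: "k \<in> {..<n}"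
    show "A $$ (i,k) * B $$ (k,j) = 0"
    proof (cases "k < i")
      case True then show ?thesis using ut_entry[OF A(2,1) True i] by simp
    next
      case False then have "j < k" using ij by simp
      then show ?thesis using ut_entry[OF B(2,1) _] k by auto
    qed
  qed
  finally show "(A * B) $$ (i,j) = 0" .
qed

lemma ut_diag:
  fixes A B :: "'a::comm_ring_1 mat"
  assumes A: "A \<in> carrier_mat n n" "upper_triangular A" and B: "B \<in> carrier_mat n n" "upper_triangular B"
    and i: "i < n"
  shows "(A * B) $$ (i,i) = A $$ (i,i) * B $$ (i,i)"
proof -
  have "(A * B) $$ (i,i) = (\<Sum>k<n. A $$ (i,k) * B $$ (k,i))"
    using mult_entry[OF A(1) B(1) i i] .
  also have "\<dots> = A $$ (i,i) * B $$ (i,i)"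
  proof (rule sum_single[OF i])
    fix k assume k: "k < n" "k \<noteq> i"
    show "A $$ (i,k) * B $$ (k,i) = 0"
    proof (cases "k < i")
      case True then show ?thesis using ut_entry[OF A(2,1) True i] by simp
    next
      case False then have "i < k" using k by simp
      then show ?thesis using ut_entry[OF B(2,1) _ k(1)] by simp
    qed
  qed
  finally show ?thesis .
qed

lemma ut_super:
  fixes A B :: "'a::comm_ring_1 mat"
  assumes A: "A \<in> carrier_mat n n" "upper_triangular A" and B: "B \<in> carrier_mat n n" "upper_triangular B"
    and i: "Suc i < n"
  shows "(A * B) $$ (i,Suc i) = A $$ (i,i) * B $$ (i,Suc i) + A $$ (i,Suc i) * B $$ (Suc i,Suc i)"
proof -
  have "(A * B) $$ (i,Suc i) = (\<Sum>k<n. A $$ (i,k) * B $$ (k,Suc i))"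
    using mult_entry[OF A(1) B(1)] i by simp
  also have "\<dots> = A $$ (i,i) * B $$ (i,Suc i) + A $$ (i,Suc i) * B $$ (Suc i,Suc i)"
  proof (rule sum_two[OF i])
    fix k assume k: "k < n" "k \<noteq> Suc i" "k \<noteq> i"
    show "A $$ (i,k) * B $$ (k,Suc i) = 0"
    proof (cases "k < i")
      case True then show ?thesis using ut_entry[OF A(2,1) True] i by simp
    next
      case False then have "Suc i < k" using k by simp
      then show ?thesis using ut_entry[OF B(2,1) _ k(1)] by simp
    qed
  qed simp
  finally show ?thesis .
qed

lemma prod_list_unit: "(\<forall>x\<in>set xs. (x::'a::comm_ring_1) dvd 1) \<Longrightarrow> prod_list xs dvd 1"
  by (induction xs) auto

lemma linv_S:
  fixes A B :: "'a::idom mat"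
  assumes A: "A \<in> S_mat n I" and B: "B \<in> carrier_mat n n" and BA: "B * A = 1\<^sub>m n"
  shows "B \<in> S_mat n I"
proof -
  have Ac: "A \<in> carrier_mat n n" and Au: "upper_triangular A" and Ad: "\<And>i. i < n \<Longrightarrow> A $$ (i,i) dvd 1"
    and A1: "\<And>i. i < n \<Longrightarrow> i \<notin> I \<Longrightarrow> A $$ (i,i) = 1"
    using A unfolding S_mat_def by auto
  have low: "\<forall>i. j < i \<longrightarrow> i < n \<longrightarrow> B $$ (i,j) = 0" for j
  proof (induction j rule: less_induct)
    case (less j)
    show ?case
    proof (intro allI impI)
      fix i assume ij: "j < i" "i < n"
      have j: "j < n" using ij by simp
      have "0 = (B * A) $$ (i,j)" using BA ij j by simp
      also have "\<dots> = (\<Sum>k<n. B $$ (i,k) * A $$ (k,j))" using mult_entry[OF B Ac ij(2) j] .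
      also have "\<dots> = B $$ (i,j) * A $$ (j,j)"
      proof (rule sum_single[OF j])
        fix k assume k: "k < n" "k \<noteq> j"
        show "B $$ (i,k) * A $$ (k,j) = 0"
        proof (cases "k < j")
          case True then show ?thesis using less[OF True] ij by auto
        next
          case False then have "j < k" using k by simp
          then show ?thesis using ut_entry[OF Au Ac _ k(1)] by simp
        qed
      qed
      finally have "B $$ (i,j) * A $$ (j,j) = 0" by simp
      moreover have "A $$ (j,j) \<noteq> 0" using Ad[OF j] by auto
      ultimately show "B $$ (i,j) = 0" by simp
    qed
  qed
  have Bu: "upper_triangular B" using low B by (auto intro!: upper_triangularI)
  have diag: "B $$ (i,i) * A $$ (i,i) = 1" if i: "i < n" for i
    using ut_diag[OF B Bu Ac Au i] BA i by simp
  have "B $$ (i,i) dvd 1" if i: "i < n" for i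
    using diag[OF i] by (metis dvd_triv_left)
  moreover have "B $$ (i,i) = 1" if i: "i < n" "i \<notin> I" for i
    using diag[OF i(1)] A1[OF i] by simp
  ultimately show ?thesis unfolding S_mat_def using B Bu by blast
qed

lemma S_group_is_group: "group (S_group n I :: 'a::idom mat monoid)"
proof (rule groupI)
  fix x y :: "'a mat" assume x: "x \<in> carrier (S_group n I)" and y: "y \<in> carrier (S_group n I)"
  then have xs: "x \<in> carrier_mat n n" "upper_triangular x" "\<And>i. i<n \<Longrightarrow> x $$ (i,i) dvd 1"
    "\<And>i. i<n \<Longrightarrow> i \<notin> I \<Longrightarrow> x $$ (i,i) = 1"
    and ys: "y \<in> carrier_mat n n" "upper_triangular y" "\<And>i. i<n \<Longrightarrow> y $$ (i,i) dvd 1"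
    "\<And>i. i<n \<Longrightarrow> i \<notin> I \<Longrightarrow> y $$ (i,i) = 1"
    by (auto simp: S_group_def S_mat_def)
  show "x \<otimes>\<^bsub>S_group n I\<^esub> y \<in> carrier (S_group n I)"
    using xs ys ut_mult[OF xs(1,2) ys(1,2)] ut_diag[OF xs(1,2) ys(1,2)]
    by (auto simp: S_group_def S_mat_def)
next
  show "\<one>\<^bsub>S_group n I\<^esub> \<in> carrier (S_group n I)"
    by (auto simp: S_group_def S_mat_def intro!: upper_triangularI)
next
  fix x y z :: "'a mat" assume "x \<in> carrier (S_group n I)" "y \<in> carrier (S_group n I)" "z \<in> carrier (S_group n I)"
  then show "x \<otimes>\<^bsub>S_group n I\<^esub> y \<otimes>\<^bsub>S_group n I\<^esub> z = x \<otimes>\<^bsub>S_group n I\<^esub> (y \<otimes>\<^bsub>S_group n I\<^esub> z)"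
    by (auto simp: S_group_def S_mat_def)
next
  fix x :: "'a mat" assume "x \<in> carrier (S_group n I)"
  then show "\<one>\<^bsub>S_group n I\<^esub> \<otimes>\<^bsub>S_group n I\<^esub> x = x"
    by (auto simp: S_group_def S_mat_def)
next
  fix x :: "'a mat" assume x: "x \<in> carrier (S_group n I)"
  then have xS: "x \<in> S_mat n I" by (simp add: S_group_def)
  then have xc: "x \<in> carrier_mat n n" and xu: "upper_triangular x" and xd: "\<And>i. i<n \<Longrightarrow> x $$ (i,i) dvd 1"
    by (auto simp: S_mat_def)
  have "det x = prod_list (diag_mat x)" using det_upper_triangular[OF xu xc] .
  moreover have "prod_list (diag_mat x) dvd 1"
    using xd xc by (intro prod_list_unit) (auto simp: diag_mat_def)
  ultimately obtain u where u: "1 = det x * u" by (auto simp: dvd_def)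
  define B where "B = u \<cdot>\<^sub>m adj_mat x"
  have Bc: "B \<in> carrier_mat n n" unfolding B_def using adj_mat(1)[OF xc] by simp
  have "B * x = u \<cdot>\<^sub>m (adj_mat x * x)" unfolding B_def
    using mult_smult_assoc_mat[OF adj_mat(1)[OF xc] xc] .
  also have "\<dots> = 1\<^sub>m n" using adj_mat(3)[OF xc] u
    by (intro eq_matI) (auto simp: mult.commute)
  finally have Bx: "B * x = 1\<^sub>m n" .
  have "B \<in> S_mat n I" using linv_S[OF xS Bc Bx] .
  then show "\<exists>y\<in>carrier (S_group n I). y \<otimes>\<^bsub>S_group n I\<^esub> x = \<one>\<^bsub>S_group n I\<^esub>"
    using Bx by (auto simp: S_group_def)
qed

declare minus_carrier_mat[simp]

definition zb :: "nat \<Rightarrow> 'a::zero mat \<Rightarrow> bool" where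
  "zb m X \<longleftrightarrow> (\<forall>i j. i < dim_row X \<longrightarrow> j < dim_col X \<longrightarrow> j < i + m \<longrightarrow> X $$ (i,j) = 0)"

lemma zb_mult:
  fixes X Y :: "'a::comm_ring_1 mat"
  assumes X: "X \<in> carrier_mat n n" and Y: "Y \<in> carrier_mat n n" and zX: "zb a X" and zY: "zb b Y"
  shows "zb (a + b) (X * Y)"
  unfolding zb_def
proof (intro allI impI)
  fix i j assume i: "i < dim_row (X * Y)" and j: "j < dim_col (X * Y)" and ij: "j < i + (a + b)"
  have i': "i < n" and j': "j < n" using i j X Y by auto
  have "(X * Y) $$ (i,j) = (\<Sum>k<n. X $$ (i,k) * Y $$ (k,j))" using mult_entry[OF X Y i' j'] .
  also have "\<dots> = 0"
  proof (intro sum.neutral ballI)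
    fix k assume k: "k \<in> {..<n}"
    show "X $$ (i,k) * Y $$ (k,j) = 0"
    proof (cases "k < i + a")
      case True then show ?thesis using zX X i' k unfolding zb_def by auto
    next
      case False then have "j < k + b" using ij by simp
      then show ?thesis using zY Y j' k unfolding zb_def by auto
    qed
  qed
  finally show "(X * Y) $$ (i,j) = 0" .
qed

lemma zb_minus:
  fixes X Y :: "'a::comm_ring_1 mat"
  assumes X: "X \<in> carrier_mat n n" and Y: "Y \<in> carrier_mat n n" and zX: "zb a X" and zY: "zb a Y"
  shows "zb a (X - Y)"
  using assms unfolding zb_def by auto

lemma zb_add:
  fixes X Y :: "'a::comm_ring_1 mat"
  assumes X: "X \<in> carrier_mat n n" and Y: "Y \<in> carrier_mat n n" and zX: "zb a X" and zY: "zb a Y"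
  shows "zb a (X + Y)"
  using assms unfolding zb_def by auto

lemma zb_uminus:
  fixes X :: "'a::comm_ring_1 mat"
  assumes "zb a X" shows "zb a (- X)"
  using assms unfolding zb_def by auto

lemma zb_ut: "upper_triangular X \<Longrightarrow> X \<in> carrier_mat n n \<Longrightarrow> zb 0 X"
  unfolding zb_def upper_triangular_def by auto

lemma zb_mono: "zb b X \<Longrightarrow> a \<le> b \<Longrightarrow> zb a X"
  unfolding zb_def by auto

lemma U_iff: "(A :: 'a::idom mat) \<in> U_mat n \<longleftrightarrow> A \<in> carrier_mat n n \<and> zb 1 (A - 1\<^sub>m n)"
proof
  assume "A \<in> U_mat n"
  then show "A \<in> carrier_mat n n \<and> zb 1 (A - 1\<^sub>m n)"
    unfolding U_mat_def zb_def upper_triangular_def by auto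
next
  assume A: "A \<in> carrier_mat n n \<and> zb 1 (A - 1\<^sub>m n)"
  have "A $$ (i,j) = 0" if "j < i" "i < n" for i j
    using A that unfolding zb_def
    by (auto elim!: allE[of _ i] allE[of _ j])
  moreover have "A $$ (i,i) = 1" if "i < n" for i
    using A that unfolding zb_def
    by (auto elim!: allE[of _ i] allE[of _ i])
  ultimately show "A \<in> U_mat n" using A unfolding U_mat_def upper_triangular_def by auto
qed

lemma id_prod:
  fixes A B :: "'a::comm_ring_1 mat"
  assumes A: "A \<in> carrier_mat n n" and B: "B \<in> carrier_mat n n"
  shows "A * B - 1\<^sub>m n = (A - 1\<^sub>m n) * B + (B - 1\<^sub>m n)"
proof -
  have "(A - 1\<^sub>m n) * B = A * B - 1\<^sub>m n * B"
    using minus_mult_distrib_mat[OF A one_carrier_mat B] .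
  also have "\<dots> = A * B - B" using B by simp
  finally have e: "(A - 1\<^sub>m n) * B = A * B - B" .
  show ?thesis unfolding e using A B by (intro eq_matI) auto
qed

lemma id_inv:
  fixes A B :: "'a::comm_ring_1 mat"
  assumes A: "A \<in> carrier_mat n n" and B: "B \<in> carrier_mat n n" and BA: "B * A = 1\<^sub>m n"
  shows "B - 1\<^sub>m n = - (B * (A - 1\<^sub>m n))"
proof -
  have "B * (A - 1\<^sub>m n) = B * A - B * 1\<^sub>m n"
    using mult_minus_distrib_mat[OF B A one_carrier_mat] .
  also have "\<dots> = 1\<^sub>m n - B" using B BA by simp
  finally have e: "B * (A - 1\<^sub>m n) = 1\<^sub>m n - B" .
  show ?thesis unfolding e using B by (intro eq_matI) auto
qed

lemma id_comm:
  fixes a b a' b' :: "'a::comm_ring_1 mat"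
  assumes a: "a \<in> carrier_mat n n" and b: "b \<in> carrier_mat n n"
    and a': "a' \<in> carrier_mat n n" and b': "b' \<in> carrier_mat n n"
    and one: "b * a * (a' * b') = 1\<^sub>m n"
  shows "a * b * a' * b' - 1\<^sub>m n =
    ((a - 1\<^sub>m n) * (b - 1\<^sub>m n) - (b - 1\<^sub>m n) * (a - 1\<^sub>m n)) * (a' * b')"
proof -
  have bm: "b - 1\<^sub>m n \<in> carrier_mat n n" using b by simp
  have am: "a - 1\<^sub>m n \<in> carrier_mat n n" using a by simp
  have e1: "(a - 1\<^sub>m n) * (b - 1\<^sub>m n) = a * (b - 1\<^sub>m n) - (b - 1\<^sub>m n)"
    using minus_mult_distrib_mat[OF a one_carrier_mat bm] bm by simp
  have e2: "a * (b - 1\<^sub>m n) = a * b - a"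
    using mult_minus_distrib_mat[OF a b one_carrier_mat] a by simp
  have e3: "(b - 1\<^sub>m n) * (a - 1\<^sub>m n) = b * (a - 1\<^sub>m n) - (a - 1\<^sub>m n)"
    using minus_mult_distrib_mat[OF b one_carrier_mat am] am by simp
  have e4: "b * (a - 1\<^sub>m n) = b * a - b"
    using mult_minus_distrib_mat[OF b a one_carrier_mat] b by simp
  have e5: "(a - 1\<^sub>m n) * (b - 1\<^sub>m n) - (b - 1\<^sub>m n) * (a - 1\<^sub>m n) = a * b - b * a"
    unfolding e1 e2 e3 e4 using a b by (intro eq_matI) auto
  have "(a * b - b * a) * (a' * b') = a * b * (a' * b') - b * a * (a' * b')"
    using minus_mult_distrib_mat[of "a * b" n n "b * a" "a' * b'" n] a b a' b' by simp
  also have "\<dots> = a * b * (a' * b') - 1\<^sub>m n" unfolding one by simp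
  finally show ?thesis unfolding e5 using assoc_mult_mat[OF mult_carrier_mat[OF a b] a' b'] by simp
qed

locale SG =
  fixes n :: nat and I :: "nat set" and G :: "'a::idom mat monoid"
  assumes G_def: "G = S_group n I"
begin

sublocale group G using S_group_is_group G_def by simp

lemma carrG[simp]: "carrier G = S_mat n I" and multG[simp]: "x \<otimes>\<^bsub>G\<^esub> y = x * y"
  and oneG[simp]: "\<one>\<^bsub>G\<^esub> = 1\<^sub>m n"
  by (simp_all add: G_def S_group_def)

lemma S_props:
  assumes "A \<in> S_mat n I"
  shows "A \<in> carrier_mat n n" "upper_triangular A" "\<And>i. i < n \<Longrightarrow> A $$ (i,i) dvd 1"
    "\<And>i. i < n \<Longrightarrow> i \<notin> I \<Longrightarrow> A $$ (i,i) = 1"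
  using assms by (auto simp: S_mat_def)

lemma inv_props:
  assumes "A \<in> S_mat n I"
  shows "inv\<^bsub>G\<^esub> A \<in> S_mat n I" "inv\<^bsub>G\<^esub> A * A = 1\<^sub>m n" "A * inv\<^bsub>G\<^esub> A = 1\<^sub>m n"
  using assms l_inv[of A] r_inv[of A] inv_closed[of A] by auto

lemma diag_inv:
  assumes "A \<in> S_mat n I" "i < n"
  shows "A $$ (i,i) * (inv\<^bsub>G\<^esub> A) $$ (i,i) = 1"
proof -
  have "(A * inv\<^bsub>G\<^esub> A) $$ (i,i) = A $$ (i,i) * (inv\<^bsub>G\<^esub> A) $$ (i,i)"
    using ut_diag[OF S_props(1,2)[OF assms(1)] S_props(1,2)[OF inv_props(1)[OF assms(1)]] assms(2)] .
  then show ?thesis using inv_props(3)[OF assms(1)] assms(2) by simp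
qed

lemma U_sub: "U_mat n \<subseteq> S_mat n I"
  unfolding U_mat_def S_mat_def by auto

lemma U_subgroup: "subgroup (U_mat n) G"
proof
  show "U_mat n \<subseteq> carrier G" using U_sub by simp
next
  fix x y :: "'a mat" assume x: "x \<in> U_mat n" and y: "y \<in> U_mat n"
  have xs: "x \<in> carrier_mat n n" "upper_triangular x" and ys: "y \<in> carrier_mat n n" "upper_triangular y"
    using x y unfolding U_mat_def by auto
  show "x \<otimes>\<^bsub>G\<^esub> y \<in> U_mat n"
    using ut_mult[OF xs ys] ut_diag[OF xs ys] x y xs ys unfolding U_mat_def by auto
next
  show "\<one>\<^bsub>G\<^esub> \<in> U_mat n" unfolding U_mat_def by (auto intro!: upper_triangularI)
next
  fix x :: "'a mat" assume x: "x \<in> U_mat n"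
  then have xS: "x \<in> S_mat n I" using U_sub by auto
  have "(inv\<^bsub>G\<^esub> x) $$ (i,i) = 1" if i: "i < n" for i
    using diag_inv[OF xS i] x i unfolding U_mat_def by auto
  then show "inv\<^bsub>G\<^esub> x \<in> U_mat n"
    using S_props(1,2)[OF inv_props(1)[OF xS]] unfolding U_mat_def by auto
qed

lemma U_normal: "U_mat n \<lhd> G"
proof (rule normal_inv_iff[THEN iffD2], intro conjI U_subgroup ballI)
  fix x h :: "'a mat" assume x: "x \<in> carrier G" and h: "h \<in> U_mat n"
  have xS: "x \<in> S_mat n I" using x by simp
  have hS: "h \<in> S_mat n I" using h U_sub by auto
  note xp = S_props(1,2)[OF xS] and hp = S_props(1,2)[OF hS] and ip = S_props(1,2)[OF inv_props(1)[OF xS]]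
  have xh: "x * h \<in> carrier_mat n n" "upper_triangular (x * h)"
    using ut_mult[OF xp hp] xp hp by auto
  have "(x * h * inv\<^bsub>G\<^esub> x) $$ (i,i) = 1" if i: "i < n" for i
    using ut_diag[OF xh ip i] ut_diag[OF xp hp i] diag_inv[OF xS i] h i unfolding U_mat_def by auto
  moreover have "x * h * inv\<^bsub>G\<^esub> x \<in> S_mat n I" using xS hS inv_props(1)[OF xS] by (metis carrG m_closed multG)
  ultimately show "x \<otimes>\<^bsub>G\<^esub> h \<otimes>\<^bsub>G\<^esub> inv\<^bsub>G\<^esub> x \<in> U_mat n"
    using S_props(1,2) unfolding U_mat_def by auto
qed

definition L :: "nat \<Rightarrow> 'a mat set" where
  "L m = {A \<in> U_mat n. zb (Suc m) (A - 1\<^sub>m n)}"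

lemma L_subgroup: "subgroup (L m) G"
proof
  show "L m \<subseteq> carrier G" using U_sub unfolding L_def by auto
next
  fix x y :: "'a mat" assume x: "x \<in> L m" and y: "y \<in> L m"
  have xU: "x \<in> U_mat n" and yU: "y \<in> U_mat n" using x y unfolding L_def by auto
  have xc: "x \<in> carrier_mat n n" and yc: "y \<in> carrier_mat n n" and yu: "upper_triangular y"
    using xU yU unfolding U_mat_def by auto
  have xyU: "x * y \<in> U_mat n" using subgroup.m_closed[OF U_subgroup xU yU] by simp
  have z1: "zb (Suc m + 0) ((x - 1\<^sub>m n) * y)"
    by (rule zb_mult[OF _ yc _ zb_ut[OF yu yc]]) (use x xc in \<open>auto simp: L_def\<close>)
  have "zb (Suc m) ((x - 1\<^sub>m n) * y + (y - 1\<^sub>m n))"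
    by (rule zb_add[of _ n]) (use z1 y yc xc in \<open>auto simp: L_def\<close>)
  moreover have "zb (Suc m) (x * y - 1\<^sub>m n) = zb (Suc m) ((x - 1\<^sub>m n) * y + (y - 1\<^sub>m n))"
    unfolding id_prod[OF xc yc] ..
  ultimately have "zb (Suc m) (x * y - 1\<^sub>m n)" by simp
  then show "x \<otimes>\<^bsub>G\<^esub> y \<in> L m" using xyU unfolding L_def by simp
next
  show "\<one>\<^bsub>G\<^esub> \<in> L m" unfolding L_def using subgroup.one_closed[OF U_subgroup]
    by (auto simp: zb_def)
next
  fix x :: "'a mat" assume x: "x \<in> L m"
  have xU: "x \<in> U_mat n" using x unfolding L_def by auto
  have xS: "x \<in> S_mat n I" using xU U_sub by auto
  have xc: "x \<in> carrier_mat n n" using xU unfolding U_mat_def by auto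
  note ip = S_props(1,2)[OF inv_props(1)[OF xS]]
  have "inv\<^bsub>G\<^esub> x \<in> U_mat n" using subgroup.m_inv_closed[OF U_subgroup xU] by simp
  moreover have "zb (Suc m) (inv\<^bsub>G\<^esub> x - 1\<^sub>m n)"
    unfolding id_inv[OF xc ip(1) inv_props(2)[OF xS]]
    using zb_uminus[OF zb_mult[OF ip(1) _ zb_ut[OF ip(2,1)]]] x xc unfolding L_def by auto
  ultimately show "inv\<^bsub>G\<^esub> x \<in> L m" unfolding L_def by simp
qed

lemma L0: "U_mat n \<subseteq> L 0"
  unfolding L_def using U_iff by auto

lemma comm_L:
  assumes a: "a \<in> L k" and b: "b \<in> U_mat n"
  shows "a \<otimes>\<^bsub>G\<^esub> b \<otimes>\<^bsub>G\<^esub> inv\<^bsub>G\<^esub> a \<otimes>\<^bsub>G\<^esub> inv\<^bsub>G\<^esub> b \<in> L (Suc k)"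
proof -
  have aU: "a \<in> U_mat n" using a unfolding L_def by auto
  have aS: "a \<in> S_mat n I" and bS: "b \<in> S_mat n I" using aU b U_sub by auto
  have ac: "a \<in> carrier_mat n n" and bc: "b \<in> carrier_mat n n" using aS bS S_props by auto
  note ia = S_props(1,2)[OF inv_props(1)[OF aS]] and ib = S_props(1,2)[OF inv_props(1)[OF bS]]
  have iab: "inv\<^bsub>G\<^esub> a * inv\<^bsub>G\<^esub> b \<in> carrier_mat n n" "upper_triangular (inv\<^bsub>G\<^esub> a * inv\<^bsub>G\<^esub> b)"
    using ut_mult[OF ia ib] ia ib by auto
  have one: "b * a * (inv\<^bsub>G\<^esub> a * inv\<^bsub>G\<^esub> b) = 1\<^sub>m n"
  proof -
    have "b * a * (inv\<^bsub>G\<^esub> a * inv\<^bsub>G\<^esub> b) = b * ((a * inv\<^bsub>G\<^esub> a) * inv\<^bsub>G\<^esub> b)"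
      using assoc_mult_mat[OF bc ac iab(1)] assoc_mult_mat[OF ac ia(1) ib(1)] by simp
    also have "\<dots> = b * inv\<^bsub>G\<^esub> b" using inv_props(3)[OF aS] ib by simp
    also have "\<dots> = 1\<^sub>m n" using inv_props(3)[OF bS] .
    finally show ?thesis .
  qed
  have cU: "a * b * inv\<^bsub>G\<^esub> a * inv\<^bsub>G\<^esub> b \<in> U_mat n"
    using aU b subgroup.m_closed[OF U_subgroup] subgroup.m_inv_closed[OF U_subgroup] by simp
  have za: "zb (Suc k) (a - 1\<^sub>m n)" using a unfolding L_def by auto
  have zbb: "zb 1 (b - 1\<^sub>m n)" using b U_iff by auto
  have z1: "zb (Suc k + 1) ((a - 1\<^sub>m n) * (b - 1\<^sub>m n))"
    by (rule zb_mult[OF _ _ za zbb]) (use ac bc in auto)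
  have z2: "zb (1 + Suc k) ((b - 1\<^sub>m n) * (a - 1\<^sub>m n))"
    by (rule zb_mult[OF _ _ zbb za]) (use ac bc in auto)
  have z3: "zb (Suc (Suc k)) ((a - 1\<^sub>m n) * (b - 1\<^sub>m n) - (b - 1\<^sub>m n) * (a - 1\<^sub>m n))"
  proof (rule zb_minus[of _ n])
    show "zb (Suc (Suc k)) ((a - 1\<^sub>m n) * (b - 1\<^sub>m n))" using z1 by simp
    show "zb (Suc (Suc k)) ((b - 1\<^sub>m n) * (a - 1\<^sub>m n))" using z2 by simp
  qed (use ac bc in auto)
  have "zb (Suc (Suc k) + 0) (((a - 1\<^sub>m n) * (b - 1\<^sub>m n) - (b - 1\<^sub>m n) * (a - 1\<^sub>m n)) * (inv\<^bsub>G\<^esub> a * inv\<^bsub>G\<^esub> b))"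
    by (rule zb_mult[OF _ iab(1) z3 zb_ut[OF iab(2,1)]]) (use ac bc in auto)
  then have "zb (Suc (Suc k)) (a * b * inv\<^bsub>G\<^esub> a * inv\<^bsub>G\<^esub> b - 1\<^sub>m n)"
    unfolding id_comm[OF ac bc ia(1) ib(1) one] by simp
  then show ?thesis using cU unfolding L_def by simp
qed

lemma LC_L:
  assumes H: "H \<subseteq> U_mat n"
  shows "lower_central G H m \<subseteq> L m"
proof (induction m)
  case 0 then show ?case using H L0 by simp
next
  case (Suc m)
  have "comm_set G (lower_central G H m) H \<subseteq> L (Suc m)"
    unfolding comm_set_def using Suc H comm_L by blast
  then show ?case using generate_subgroup_incl[OF _ L_subgroup] by simp
qed

lemma one_LC:
  assumes "subgroup H G"
  shows "\<one>\<^bsub>G\<^esub> \<in> lower_central G H m"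
proof (cases m)
  case 0 then show ?thesis using subgroup.one_closed[OF assms] by simp
next
  case (Suc k) then show ?thesis using generate.one[of G] by simp
qed

lemma L_big:
  assumes "A \<in> L m" "n \<le> Suc m"
  shows "A = 1\<^sub>m n"
proof -
  have Ac: "A \<in> carrier_mat n n" and z: "zb (Suc m) (A - 1\<^sub>m n)" using assms unfolding L_def U_mat_def by auto
  have "A $$ (i,j) = 1\<^sub>m n $$ (i,j)" if "i < n" "j < n" for i j
  proof -
    have "(A - 1\<^sub>m n) $$ (i,j) = 0" using z that Ac assms(2) unfolding zb_def by auto
    then show ?thesis using that Ac by simp
  qed
  then show ?thesis using Ac by (intro eq_matI) auto
qed

lemma U_locally_nilpotent: "locally_nilpotent_subgroup G (U_mat n)"
  unfolding locally_nilpotent_subgroup_def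
proof (intro conjI U_subgroup allI impI)
  fix F :: "'a mat set" assume F: "finite F \<and> F \<subseteq> U_mat n"
  have FG: "F \<subseteq> carrier G" using F U_sub by auto
  have HU: "generate G F \<subseteq> U_mat n" using F generate_subgroup_incl[OF _ U_subgroup] by auto
  have Hs: "subgroup (generate G F) G" using generate_is_subgroup[OF FG] .
  have "lower_central G (generate G F) n = {\<one>\<^bsub>G\<^esub>}"
    using LC_L[OF HU, of n] L_big[of _ n] one_LC[OF Hs, of n] by auto
  then show "nilpotent_subgroup G (generate G F)"
    unfolding nilpotent_subgroup_def using Hs by blast
qed

end

context group begin

lemma comm_set_carrier: "A \<subseteq> carrier G \<Longrightarrow> B \<subseteq> carrier G \<Longrightarrow> comm_set G A B \<subseteq> carrier G"
  unfolding comm_set_def by (blast intro: m_closed inv_closed)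

lemma LC_carrier: "H \<subseteq> carrier G \<Longrightarrow> lower_central G H k \<subseteq> carrier G"
proof (induction k)
  case (Suc k)
  then show ?case using generate_incl[OF comm_set_carrier[OF Suc.IH]] Suc.prems by simp
qed simp

lemma iso_comm_set:
  assumes phi: "\<phi> \<in> iso G G" and A: "A \<subseteq> carrier G" and B: "B \<subseteq> carrier G"
  shows "\<phi> ` comm_set G A B = comm_set G (\<phi> ` A) (\<phi> ` B)"
proof -
  interpret h: group_hom G G \<phi> using phi by (simp add: group_hom_axioms_def group_hom_def is_group iso_iff)
  have e: "\<phi> (a \<otimes> b \<otimes> inv a \<otimes> inv b) = \<phi> a \<otimes> \<phi> b \<otimes> inv \<phi> a \<otimes> inv \<phi> b"
    if "a \<in> carrier G" "b \<in> carrier G" for a b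
    using that by simp
  show ?thesis unfolding comm_set_def
  proof (intro equalityI subsetI)
    fix x assume "x \<in> \<phi> ` {a \<otimes> b \<otimes> inv a \<otimes> inv b |a b. a \<in> A \<and> b \<in> B}"
    then obtain a b where "a \<in> A" "b \<in> B" "x = \<phi> (a \<otimes> b \<otimes> inv a \<otimes> inv b)" by blast
    then show "x \<in> {a \<otimes> b \<otimes> inv a \<otimes> inv b |a b. a \<in> \<phi> ` A \<and> b \<in> \<phi> ` B}"
      using e A B by blast
  next
    fix x assume "x \<in> {a \<otimes> b \<otimes> inv a \<otimes> inv b |a b. a \<in> \<phi> ` A \<and> b \<in> \<phi> ` B}"
    then obtain a b where "a \<in> A" "b \<in> B" "x = \<phi> a \<otimes> \<phi> b \<otimes> inv \<phi> a \<otimes> inv \<phi> b" by blast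
    moreover have "a \<in> carrier G" "b \<in> carrier G" using \<open>a \<in> A\<close> \<open>b \<in> B\<close> A B by auto
    ultimately show "x \<in> \<phi> ` {a \<otimes> b \<otimes> inv a \<otimes> inv b |a b. a \<in> A \<and> b \<in> B}"
      using e[of a b] by (auto intro!: image_eqI[where x = "a \<otimes> b \<otimes> inv a \<otimes> inv b"])
  qed
qed

lemma iso_LC:
  assumes phi: "\<phi> \<in> iso G G" and H: "H \<subseteq> carrier G"
  shows "\<phi> ` lower_central G H k = lower_central G (\<phi> ` H) k"
proof (induction k)
  case 0 then show ?case by simp
next
  case (Suc k)
  interpret h: group_hom G G \<phi> using phi by (simp add: group_hom_axioms_def group_hom_def is_group iso_iff)
  have c: "comm_set G (lower_central G H k) H \<subseteq> carrier G"
    using comm_set_carrier LC_carrier H by auto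
  have "\<phi> ` lower_central G H (Suc k) = generate G (\<phi> ` comm_set G (lower_central G H k) H)"
    using h.generate_img[OF c] by simp
  also have "\<phi> ` comm_set G (lower_central G H k) H = comm_set G (lower_central G (\<phi> ` H) k) (\<phi> ` H)"
    using iso_comm_set[OF phi LC_carrier[OF H] H] Suc by simp
  finally show ?case by simp
qed

lemma iso_normal:
  assumes phi: "\<phi> \<in> iso G G" and N: "N \<lhd> G"
  shows "\<phi> ` N \<lhd> G"
proof -
  interpret h: group_hom G G \<phi> using phi by (simp add: group_hom_axioms_def group_hom_def is_group iso_iff)
  have Ns: "subgroup N G" using N normal_imp_subgroup by blast
  have surj: "\<phi> ` carrier G = carrier G" using phi by (simp add: iso_iff)
  show ?thesis
  proof (rule normal_inv_iff[THEN iffD2], intro conjI ballI)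
    show "subgroup (\<phi> ` N) G" using h.subgroup_img_is_subgroup[OF Ns] .
  next
    fix x y assume x: "x \<in> carrier G" and y: "y \<in> \<phi> ` N"
    obtain x' where x': "x' \<in> carrier G" "x = \<phi> x'" using x surj by blast
    obtain m where m: "m \<in> N" "y = \<phi> m" using y by blast
    have mc: "m \<in> carrier G" using m Ns subgroup.subset by blast
    have "x' \<otimes> m \<otimes> inv x' \<in> N" using N x' mc m normal_inv_iff by blast
    moreover have "\<phi> (x' \<otimes> m \<otimes> inv x') = x \<otimes> y \<otimes> inv x" using x' m mc by simp
    ultimately show "x \<otimes> y \<otimes> inv x \<in> \<phi> ` N" by force
  qed
qed

lemma iso_lnil:
  assumes phi: "\<phi> \<in> iso G G" and N: "locally_nilpotent_subgroup G N"
  shows "locally_nilpotent_subgroup G (\<phi> ` N)"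
proof -
  interpret h: group_hom G G \<phi> using phi by (simp add: group_hom_axioms_def group_hom_def is_group iso_iff)
  have Ns: "subgroup N G" using N unfolding locally_nilpotent_subgroup_def by blast
  have Nc: "N \<subseteq> carrier G" using Ns subgroup.subset by blast
  show ?thesis unfolding locally_nilpotent_subgroup_def
  proof (intro conjI allI impI)
    show "subgroup (\<phi> ` N) G" using h.subgroup_img_is_subgroup[OF Ns] .
  next
    fix F assume F: "finite F \<and> F \<subseteq> \<phi> ` N"
    then obtain F' where F': "F' \<subseteq> N" "finite F'" "F = \<phi> ` F'"
      by (meson finite_subset_image)
    have F'c: "F' \<subseteq> carrier G" using F' Nc by auto
    have "nilpotent_subgroup G (generate G F')" using N F' unfolding locally_nilpotent_subgroup_def by blast
    then obtain k where k: "lower_central G (generate G F') k = {\<one>}"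
      unfolding nilpotent_subgroup_def by blast
    have gen: "generate G F = \<phi> ` generate G F'" using h.generate_img[OF F'c] F' by simp
    have "lower_central G (generate G F) k = \<phi> ` lower_central G (generate G F') k"
      unfolding gen using iso_LC[OF phi generate_incl[OF F'c]] by simp
    also have "\<dots> = {\<one>}" using k by simp
    finally have "lower_central G (generate G F) k = {\<one>}" .
    moreover have "subgroup (generate G F) G"
    proof -
      have "F \<subseteq> carrier G" using F' F'c h.hom_closed by auto
      then show ?thesis using generate_is_subgroup by blast
    qed
    ultimately show "nilpotent_subgroup G (generate G F)" unfolding nilpotent_subgroup_def by blast
  qed
qed

end

lemma adj_diag:
  assumes "\<forall>i. Suc i < n \<longrightarrow> f i = f (Suc i)"
  shows "p < n \<Longrightarrow> f p = f 0"
  using assms by (induction p) auto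

context SG begin

lemma dS: "(A :: 'a mat) \<in> S_mat n I \<Longrightarrow> B \<in> S_mat n I \<Longrightarrow> i < n \<Longrightarrow> (A * B) $$ (i,i) = A $$ (i,i) * B $$ (i,i)"
  using ut_diag[OF S_props(1,2) S_props(1,2)] by blast

lemma mS: "(A :: 'a mat) \<in> S_mat n I \<Longrightarrow> B \<in> S_mat n I \<Longrightarrow> A * B \<in> S_mat n I"
  using m_closed[of A B] by simp

lemma iS: "(A :: 'a mat) \<in> S_mat n I \<Longrightarrow> inv\<^bsub>G\<^esub> A \<in> S_mat n I"
  using inv_closed by simp

lemma comm_U:
  assumes x: "x \<in> S_mat n I" and y: "y \<in> S_mat n I"
  shows "x * y * inv\<^bsub>G\<^esub> x * inv\<^bsub>G\<^esub> y \<in> U_mat n"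
proof -
  have c: "x * y * inv\<^bsub>G\<^esub> x * inv\<^bsub>G\<^esub> y \<in> S_mat n I" using x y mS iS by blast
  have "(x * y * inv\<^bsub>G\<^esub> x * inv\<^bsub>G\<^esub> y) $$ (i,i) = 1" if i: "i < n" for i
  proof -
    have "(x * y * inv\<^bsub>G\<^esub> x * inv\<^bsub>G\<^esub> y) $$ (i,i)
       = (x $$ (i,i) * (inv\<^bsub>G\<^esub> x) $$ (i,i)) * (y $$ (i,i) * (inv\<^bsub>G\<^esub> y) $$ (i,i))"
    proof -
      have a1: "(x * y * inv\<^bsub>G\<^esub> x * inv\<^bsub>G\<^esub> y) $$ (i,i) = (x * y * inv\<^bsub>G\<^esub> x) $$ (i,i) * (inv\<^bsub>G\<^esub> y) $$ (i,i)"
        using dS[OF mS[OF mS[OF x y] iS[OF x]] iS[OF y] i] .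
      have a2: "(x * y * inv\<^bsub>G\<^esub> x) $$ (i,i) = (x * y) $$ (i,i) * (inv\<^bsub>G\<^esub> x) $$ (i,i)"
        using dS[OF mS[OF x y] iS[OF x] i] .
      have a3: "(x * y) $$ (i,i) = x $$ (i,i) * y $$ (i,i)" using dS[OF x y i] .
      show ?thesis unfolding a1 a2 a3 by (simp add: ac_simps)
    qed
    then show ?thesis using diag_inv[OF x i] diag_inv[OF y i] by simp
  qed
  then show ?thesis using c S_props(1,2)[OF c] unfolding U_mat_def by auto
qed

lemma comm_eq:
  assumes x: "x \<in> carrier G" and y: "y \<in> carrier G"
  shows "x \<otimes>\<^bsub>G\<^esub> y \<otimes>\<^bsub>G\<^esub> inv\<^bsub>G\<^esub> x \<otimes>\<^bsub>G\<^esub> inv\<^bsub>G\<^esub> y \<otimes>\<^bsub>G\<^esub> y \<otimes>\<^bsub>G\<^esub> x = x \<otimes>\<^bsub>G\<^esub> y"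
  using x y by (simp del: multG carrG oneG add: m_assoc)

lemma key:
  assumes x: "x \<in> S_mat n I" and y: "y \<in> S_mat n I" and i: "Suc i < n"
  defines "c \<equiv> x * y * inv\<^bsub>G\<^esub> x * inv\<^bsub>G\<^esub> y"
  shows "y $$ (i,i) * x $$ (i,Suc i) + (y $$ (i,Suc i) + c $$ (i,Suc i) * y $$ (Suc i,Suc i)) * x $$ (Suc i,Suc i)
       = x $$ (i,i) * y $$ (i,Suc i) + x $$ (i,Suc i) * y $$ (Suc i,Suc i)"
proof -
  have cU: "c \<in> U_mat n" unfolding c_def using comm_U[OF x y] .
  have cS: "c \<in> S_mat n I" using cU U_sub by auto
  have eq: "c * y * x = x * y" using comm_eq[of x y] x y unfolding c_def by simp
  note xp = S_props(1,2)[OF x] and yp = S_props(1,2)[OF y] and cp = S_props(1,2)[OF cS]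
  have cyp: "c * y \<in> carrier_mat n n" "upper_triangular (c * y)" using ut_mult[OF cp yp] cp yp by auto
  have i': "i < n" using i by simp
  have c1: "c $$ (i,i) = 1" "c $$ (Suc i, Suc i) = 1" using cU i i' unfolding U_mat_def by auto
  have "(c * y * x) $$ (i, Suc i) = (c * y) $$ (i,i) * x $$ (i,Suc i) + (c * y) $$ (i,Suc i) * x $$ (Suc i,Suc i)"
    using ut_super[OF cyp xp i] .
  also have "(c * y) $$ (i,i) = y $$ (i,i)" using ut_diag[OF cp yp i'] c1 by simp
  also have "(c * y) $$ (i,Suc i) = y $$ (i,Suc i) + c $$ (i,Suc i) * y $$ (Suc i,Suc i)"
    using ut_super[OF cp yp i] c1 by simp
  finally have "(c * y * x) $$ (i, Suc i) =
    y $$ (i,i) * x $$ (i,Suc i) + (y $$ (i,Suc i) + c $$ (i,Suc i) * y $$ (Suc i,Suc i)) * x $$ (Suc i,Suc i)" .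
  moreover have "(x * y) $$ (i, Suc i) = x $$ (i,i) * y $$ (i,Suc i) + x $$ (i,Suc i) * y $$ (Suc i,Suc i)"
    using ut_super[OF xp yp i] .
  ultimately show ?thesis using eq by simp
qed

lemma maximal:
  assumes I: "I \<subset> {0..<n}" and N: "N \<lhd> G" and LN: "locally_nilpotent_subgroup G N"
  shows "N \<subseteq> U_mat n"
proof (rule subsetI, rule ccontr)
  fix g assume gN: "g \<in> N" and gU: "g \<notin> U_mat n"
  have Ns: "subgroup N G" using N normal_imp_subgroup by blast
  have gS: "g \<in> S_mat n I" using gN subgroup.subset[OF Ns] by auto
  obtain p where p: "p < n" "g $$ (p,p) \<noteq> 1"
    using gU gS S_props(1,2)[OF gS] unfolding U_mat_def by auto
  have "\<exists>q. q \<in> {0..<n} - I" using I by blast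
  then obtain q where q: "q < n" "q \<notin> I" by auto
  have gq: "g $$ (q,q) = 1" using S_props(4)[OF gS q] .
  have "\<exists>i. Suc i < n \<and> g $$ (i,i) \<noteq> g $$ (Suc i, Suc i)"
  proof (rule ccontr)
    assume "\<not> (\<exists>i. Suc i < n \<and> g $$ (i,i) \<noteq> g $$ (Suc i, Suc i))"
    then have A: "\<forall>i. Suc i < n \<longrightarrow> g $$ (i,i) = g $$ (Suc i,Suc i)" by auto
    have "g $$ (p,p) = g $$ (0,0)" using adj_diag[of n "\<lambda>k. g $$ (k,k)" p] A p(1) by simp
    moreover have "g $$ (q,q) = g $$ (0,0)" using adj_diag[of n "\<lambda>k. g $$ (k,k)" q] A q(1) by simp
    ultimately show False using p(2) gq by simp
  qed
  then obtain i where i: "Suc i < n" "g $$ (i,i) \<noteq> g $$ (Suc i, Suc i)" by blast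
  have i': "i < n" using i by simp
  define t :: "'a mat" where "t = mat n n (\<lambda>(r,c). if r = c then 1 else if r = i \<and> c = Suc i then 1 else 0)"
  have tU: "t \<in> U_mat n" unfolding t_def U_mat_def upper_triangular_def by auto
  have tS: "t \<in> S_mat n I" using tU U_sub by auto
  have t_ent: "t $$ (i,i) = 1" "t $$ (i,Suc i) = 1" "t $$ (Suc i,Suc i) = 1"
    unfolding t_def using i i' by auto
  define cm where "cm x y = x * y * inv\<^bsub>G\<^esub> x * inv\<^bsub>G\<^esub> y" for x y
  have cmS: "cm x y \<in> S_mat n I" if "x \<in> S_mat n I" "y \<in> S_mat n I" for x y
    unfolding cm_def using that mS iS by blast
  have h0N: "cm g t \<in> N"
  proof -
    have "inv\<^bsub>G\<^esub> g \<in> N" using subgroup.m_inv_closed[OF Ns gN] .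
    then have "t \<otimes>\<^bsub>G\<^esub> inv\<^bsub>G\<^esub> g \<otimes>\<^bsub>G\<^esub> inv\<^bsub>G\<^esub> t \<in> N" using N tS normal_inv_iff by simp
    then have "g \<otimes>\<^bsub>G\<^esub> (t \<otimes>\<^bsub>G\<^esub> inv\<^bsub>G\<^esub> g \<otimes>\<^bsub>G\<^esub> inv\<^bsub>G\<^esub> t) \<in> N"
      using subgroup.m_closed[OF Ns gN] by blast
    moreover have "g \<otimes>\<^bsub>G\<^esub> (t \<otimes>\<^bsub>G\<^esub> inv\<^bsub>G\<^esub> g \<otimes>\<^bsub>G\<^esub> inv\<^bsub>G\<^esub> t) = g \<otimes>\<^bsub>G\<^esub> t \<otimes>\<^bsub>G\<^esub> inv\<^bsub>G\<^esub> g \<otimes>\<^bsub>G\<^esub> inv\<^bsub>G\<^esub> t"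
    proof -
      have gc: "g \<in> carrier G" "t \<in> carrier G" using gS tS by simp_all
      show ?thesis using gc by (simp del: multG carrG oneG add: m_assoc)
    qed
    ultimately show ?thesis unfolding cm_def by simp
  qed
  define h where "h = rec_nat (cm g t) (\<lambda>_ x. cm x g)"
  have h_0: "h 0 = cm g t" and h_Suc: "h (Suc m) = cm (h m) g" for m unfolding h_def by simp_all
  have hS: "h m \<in> S_mat n I" for m
    by (induction m) (auto simp: h_0 h_Suc intro: cmS gS tS)
  have hU: "h m \<in> U_mat n" for m
    by (cases m) (auto simp: h_0 h_Suc cm_def intro: comm_U gS tS hS)
  define H where "H = generate G {g, cm g t}"
  have F: "finite {g, cm g t} \<and> {g, cm g t} \<subseteq> N" using gN h0N by auto
  then have "nilpotent_subgroup G H"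
    using LN unfolding locally_nilpotent_subgroup_def H_def by blast
  then obtain k where k: "lower_central G H k = {1\<^sub>m n}"
    unfolding nilpotent_subgroup_def by auto
  have gH: "g \<in> H" unfolding H_def by (auto intro: generate.incl)
  have hLC: "h m \<in> lower_central G H m" for m
  proof (induction m)
    case 0 then show ?case unfolding H_def by (auto simp: h_0 intro: generate.incl)
  next
    case (Suc m)
    have "h (Suc m) \<in> comm_set G (lower_central G H m) H"
      unfolding comm_set_def h_Suc cm_def using Suc gH by auto
    then show ?case by (auto intro: generate.incl)
  qed
  have nz: "h m $$ (i, Suc i) \<noteq> 0" for m
  proof (induction m)
    case 0
    have "t $$ (i,i) * g $$ (i,Suc i) + (t $$ (i,Suc i) + cm g t $$ (i,Suc i) * t $$ (Suc i,Suc i)) * g $$ (Suc i,Suc i)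
       = g $$ (i,i) * t $$ (i,Suc i) + g $$ (i,Suc i) * t $$ (Suc i,Suc i)"
      using key[OF gS tS i(1)] unfolding cm_def by simp
    then have "g $$ (i,Suc i) + (1 + cm g t $$ (i,Suc i)) * g $$ (Suc i,Suc i) = g $$ (i,i) + g $$ (i,Suc i)"
      using t_ent by simp
    then show ?case using i(2) by (auto simp: h_0)
  next
    case (Suc m)
    have hm1: "h m $$ (i,i) = 1" "h m $$ (Suc i,Suc i) = 1" using hU[of m] i i' unfolding U_mat_def by auto
    have "g $$ (i,i) * h m $$ (i,Suc i) + (g $$ (i,Suc i) + cm (h m) g $$ (i,Suc i) * g $$ (Suc i,Suc i)) * h m $$ (Suc i,Suc i)
       = h m $$ (i,i) * g $$ (i,Suc i) + h m $$ (i,Suc i) * g $$ (Suc i,Suc i)"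
      using key[OF hS gS i(1)] unfolding cm_def by simp
    then have e: "g $$ (i,i) * h m $$ (i,Suc i) + (g $$ (i,Suc i) + cm (h m) g $$ (i,Suc i) * g $$ (Suc i,Suc i))
       = g $$ (i,Suc i) + h m $$ (i,Suc i) * g $$ (Suc i,Suc i)"
      using hm1 by simp
    show ?case
    proof
      assume "h (Suc m) $$ (i, Suc i) = 0"
      then have "g $$ (i,i) * h m $$ (i,Suc i) = h m $$ (i,Suc i) * g $$ (Suc i,Suc i)"
        using e by (simp add: h_Suc)
      then have "h m $$ (i,Suc i) * (g $$ (i,i) - g $$ (Suc i,Suc i)) = 0"
        by (simp add: algebra_simps)
      then show False using Suc.IH i(2) by simp
    qed
  qed
  have "h k = 1\<^sub>m n" using hLC[of k] k by simp
  then show False using nz[of k] i i' by simp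
qed

end

theorem mainTheorem7:
  fixes n :: nat and I :: "nat set"
  assumes "n \<ge> 2" and "I \<subset> {0..<n}"
  shows "hirsch_plotkin_radical (S_group n I :: 'a::idom mat monoid) (U_mat n)
       \<and> characteristic_subgroup (S_group n I :: 'a::idom mat monoid) (U_mat n)"
proof -
  interpret SG n I "S_group n I :: 'a mat monoid" by unfold_locales simp
  let ?G = "S_group n I :: 'a mat monoid"
  have hp: "hirsch_plotkin_radical ?G (U_mat n)"
    unfolding hirsch_plotkin_radical_def
    using U_normal U_locally_nilpotent maximal[OF assms(2)] by blast
  have sub: "\<phi> ` U_mat n \<subseteq> U_mat n" if phi: "\<phi> \<in> iso ?G ?G" for \<phi>
    using maximal[OF assms(2) iso_normal[OF phi U_normal] iso_lnil[OF phi U_locally_nilpotent]] .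
  have "\<phi> ` U_mat n = U_mat n" if phi: "\<phi> \<in> iso ?G ?G" for \<phi>
  proof
    show "\<phi> ` U_mat n \<subseteq> U_mat n" using sub[OF phi] .
  next
    define \<psi> where "\<psi> = inv_into (carrier ?G) \<phi>"
    have psi: "\<psi> \<in> iso ?G ?G" unfolding \<psi>_def using iso_set_sym[OF phi] .
    have surj: "\<phi> ` carrier ?G = carrier ?G" using phi by (simp add: iso_iff)
    show "U_mat n \<subseteq> \<phi> ` U_mat n"
    proof
      fix u :: "'a mat" assume u: "u \<in> U_mat n"
      have "u \<in> S_mat n I" using u U_sub by blast
      then have uc: "u \<in> carrier ?G" by (simp add: S_group_def)
      have "\<psi> u \<in> U_mat n" using sub[OF psi] u by auto
      moreover have "\<phi> (\<psi> u) = u" unfolding \<psi>_def using surj uc by (simp add: f_inv_into_f)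
      ultimately show "u \<in> \<phi> ` U_mat n" by force
    qed
  qed
  then have "characteristic_subgroup ?G (U_mat n)"
    unfolding characteristic_subgroup_def using U_subgroup by blast
  with hp show ?thesis by blast
qed

end
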